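(* Fix an instance $(d,\mathcal{C},k)$ of $k$-center with $|\mathcal{C}|=n$, an optimal solution $F^*=\{o_1,\dots,o_k\}$ with balls $O_t=\{c\in\mathcal{C}: d(o_t,c)\le \mathrm{OPT}\}$, and an execution $F_0\supseteq F_1\supseteq\dots\supseteq F_{n-k}$ of the reverse greedy algorithm. If there exists $t$ such that $|O_t\cap F_{n-k}|\ge 2$, then $\Gamma(F_{c_{l+1}}) < \Gamma(F_{c_l})$ for every integer $l\ge 0$ such that both $c_l$ and $c_{l+1}$ are defined.
   Context: An instance of $k$-center consists of a finite metric space $(d,\mathcal{C})$ with $|\mathcal{C}|=n$ and an integer $k\le n$; every point is both a client and a potential facility. For nonempty $F\subseteq\mathcal{C}$, $d(c,F):=\min_{f\in F}d(c,f)$ and $\mathrm{cost}(F):=\max_{c\in\mathcal{C}}d(c,F)$; $\mathrm{OPT}$ is the minimum cost over sets of at most $k$ points, attained by $F^*$. Reverse greedy: $F_0:=\mathcal{C}$, and for $i=1,\dots,n-k$, $F_i:=F_{i-1}\setminus\{f_i\}$ where $f_i\in\arg\min_{f\in F_{i-1}}\mathrm{cost}(F_{i-1}\setminus\{f\})$ (ties arbitrary). For an integer $l\ge0$, $F_i$ is called $l$-critical if $\mathrm{cost}(F_i)\le 2l\cdot\mathrm{OPT}$ and $\mathrm{cost}(F_{i+1})>2l\cdot\mathrm{OPT}$ (with $0\le i< n-k$); $c_l$ denotes the index $i$ such that $F_i$ is $l$-critical, and $c_l$ is said to be defined if such an $i$ exists. A consolidation of $F\subseteq\mathcal{C}$ is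 a collection $\Phi=\{P_1,P_2,\dots\}$ of subsets $P_s\subseteq\mathcal{C}$ such that (1) $F\subseteq\bigcup_s P_s$; (2) $\max_{x,y\in P_s}d(x,y)\le 2\cdot\mathrm{OPT}$ for every $P_s$; (3) whenever $f,f'\in F\cap O_t$ for some $t$, there is some $P_s$ with $f,f'\in P_s$. The consolidation number $\Gamma(F)$ is the minimum cardinality of a consolidation of $F$. *)

theory Defs
  imports Complex_Main
begin

definition finite_metric :: "('a \<Rightarrow> 'a \<Rightarrow> real) \<Rightarrow> 'a set \<Rightarrow> bool" where
  "finite_metric d C \<longleftrightarrow> finite C \<and>
     (\<forall>x\<in>C. \<forall>y\<in>C. d x y \<ge> 0 \<and> d x y = d y x \<and> (d x y = 0 \<longleftrightarrow> x = y)) \<and>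
     (\<forall>x\<in>C. \<forall>y\<in>C. \<forall>z\<in>C. d x z \<le> d x y + d y z)"

definition dist_set :: "('a \<Rightarrow> 'a \<Rightarrow> real) \<Rightarrow> 'a \<Rightarrow> 'a set \<Rightarrow> real" where
  "dist_set d c F = Min ((\<lambda>f. d c f) ` F)"

definition cost :: "('a \<Rightarrow> 'a \<Rightarrow> real) \<Rightarrow> 'a set \<Rightarrow> 'a set \<Rightarrow> real" where
  "cost d C F = Max ((\<lambda>c. dist_set d c F) ` C)"

definition OPT :: "('a \<Rightarrow> 'a \<Rightarrow> real) \<Rightarrow> 'a set \<Rightarrow> nat \<Rightarrow> real" where
  "OPT d C k = Min {cost d C F | F. F \<subseteq> C \<and> F \<noteq> {} \<and> card F \<le> k}"

definition optimal_solution :: "('a \<Rightarrow> 'a \<Rightarrow> real) \<Rightarrow> 'a set \<Rightarrow> nat \<Rightarrow> 'a set \<Rightarrow> bool" where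
  "optimal_solution d C k Fs \<longleftrightarrow> Fs \<subseteq> C \<and> Fs \<noteq> {} \<and> card Fs \<le> k \<and> cost d C Fs = OPT d C k"

definition opt_ball :: "('a \<Rightarrow> 'a \<Rightarrow> real) \<Rightarrow> 'a set \<Rightarrow> nat \<Rightarrow> 'a \<Rightarrow> 'a set" where
  "opt_ball d C k oc = {c \<in> C. d oc c \<le> OPT d C k}"

definition reverse_greedy :: "('a \<Rightarrow> 'a \<Rightarrow> real) \<Rightarrow> 'a set \<Rightarrow> nat \<Rightarrow> (nat \<Rightarrow> 'a set) \<Rightarrow> bool" where
  "reverse_greedy d C k F \<longleftrightarrow> F 0 = C \<and>
     (\<forall>i\<in>{1..card C - k}. \<exists>f\<in>F (i - 1). F i = F (i - 1) - {f} \<and>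
        (\<forall>g\<in>F (i - 1). cost d C (F (i - 1) - {f}) \<le> cost d C (F (i - 1) - {g})))"

definition critical :: "('a \<Rightarrow> 'a \<Rightarrow> real) \<Rightarrow> 'a set \<Rightarrow> nat \<Rightarrow> (nat \<Rightarrow> 'a set) \<Rightarrow> nat \<Rightarrow> nat \<Rightarrow> bool" where
  "critical d C k F l i \<longleftrightarrow> i < card C - k \<and>
     cost d C (F i) \<le> 2 * real l * OPT d C k \<and> cost d C (F (Suc i)) > 2 * real l * OPT d C k"

definition consolidation :: "('a \<Rightarrow> 'a \<Rightarrow> real) \<Rightarrow> 'a set \<Rightarrow> nat \<Rightarrow> 'a set \<Rightarrow> 'a set \<Rightarrow> 'a set set \<Rightarrow> bool" where
  "consolidation d C k Fs F \<Phi> \<longleftrightarrow> finite \<Phi> \<and> (\<forall>P\<in>\<Phi>. P \<subseteq> C) \<and>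
     F \<subseteq> \<Union>\<Phi> \<and>
     (\<forall>P\<in>\<Phi>. \<forall>x\<in>P. \<forall>y\<in>P. d x y \<le> 2 * OPT d C k) \<and>
     (\<forall>oc\<in>Fs. \<forall>f\<in>F \<inter> opt_ball d C k oc. \<forall>f'\<in>F \<inter> opt_ball d C k oc. \<exists>P\<in>\<Phi>. f \<in> P \<and> f' \<in> P)"

definition consolidation_number :: "('a \<Rightarrow> 'a \<Rightarrow> real) \<Rightarrow> 'a set \<Rightarrow> nat \<Rightarrow> 'a set \<Rightarrow> 'a set \<Rightarrow> nat" where
  "consolidation_number d C k Fs F = (LEAST m. \<exists>\<Phi>. consolidation d C k Fs F \<Phi> \<and> card \<Phi> = m)"

end

theory Submission
  imports Defs
begin

lemma rg_step:
  assumes "reverse_greedy d C k F" "Suc i \<le> card C - k"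
  shows "\<exists>f\<in>F i. F (Suc i) = F i - {f} \<and> (\<forall>g\<in>F i. cost d C (F i - {f}) \<le> cost d C (F i - {g}))"
proof -
  have "Suc i \<in> {1..card C - k}" using assms(2) by simp
  then show ?thesis using assms(1) unfolding reverse_greedy_def by fastforce
qed

lemma rg_mono:
  assumes "reverse_greedy d C k F" "i \<le> j" "j \<le> card C - k"
  shows "F j \<subseteq> F i"
  using assms(2,3)
proof (induction j rule: dec_induct)
  case base
  then show ?case by simp
next
  case (step n)
  then obtain f where "F (Suc n) = F n - {f}" using rg_step[OF assms(1), of n] by auto
  then show ?case using step by auto
qed

lemma rg_subC:
  assumes "reverse_greedy d C k F" "j \<le> card C - k"
  shows "F j \<subseteq> C"
  using rg_mono[OF assms(1) _ assms(2), of 0] assms(1) unfolding reverse_greedy_def by auto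

lemma dist_set_le:
  assumes "finite A" "g \<in> A"
  shows "dist_set d c A \<le> d c g"
  unfolding dist_set_def using assms by (intro Min_le) auto

lemma dist_set_attained:
  assumes "finite A" "A \<noteq> {}"
  shows "\<exists>g\<in>A. dist_set d c A = d c g"
proof -
  have "Min ((\<lambda>f. d c f) ` A) \<in> (\<lambda>f. d c f) ` A" using assms by (intro Min_in) auto
  then show ?thesis unfolding dist_set_def by auto
qed

lemma dist_le_cost:
  assumes "finite C" "c \<in> C"
  shows "dist_set d c F \<le> cost d C F"
  unfolding cost_def using assms by (intro Max_ge) auto

lemma cost_witness:
  assumes "finite C" "C \<noteq> {}"
  shows "\<exists>c\<in>C. cost d C F = dist_set d c F"
proof -
  have "Max ((\<lambda>c. dist_set d c F) ` C) \<in> (\<lambda>c. dist_set d c F) ` C" using assms by (intro Max_in) auto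
  then show ?thesis unfolding cost_def by auto
qed

lemma cost_mono:
  assumes "finite C" "C \<noteq> {}" "finite B" "A \<subseteq> B" "A \<noteq> {}"
  shows "cost d C B \<le> cost d C A"
proof -
  obtain c where c: "c \<in> C" "cost d C B = dist_set d c B" using cost_witness[OF assms(1,2)] by blast
  obtain g where g: "g \<in> A" "dist_set d c A = d c g"
    using dist_set_attained[OF finite_subset[OF assms(4,3)] assms(5)] by blast
  have "dist_set d c B \<le> d c g" using dist_set_le[OF assms(3)] g assms(4) by auto
  also have "\<dots> \<le> cost d C A" using g dist_le_cost[OF assms(1) c(1), of d A] by simp
  finally show ?thesis using c by simp
qed

lemma consolidation_exists:
  assumes "finite_metric d C" "optimal_solution d C k Fs" "F \<subseteq> C"
  shows "consolidation d C k Fs F (opt_ball d C k ` Fs)"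
proof -
  have fin: "finite C" using assms(1) unfolding finite_metric_def by simp
  have FsC: "Fs \<subseteq> C" "Fs \<noteq> {}" and cFs: "cost d C Fs = OPT d C k"
    using assms(2) unfolding optimal_solution_def by auto
  have finFs: "finite Fs" using fin FsC finite_subset by blast
  have cov: "F \<subseteq> \<Union>(opt_ball d C k ` Fs)"
  proof
    fix x assume x: "x \<in> F"
    then have xC: "x \<in> C" using assms(3) by auto
    obtain g where g: "g \<in> Fs" "dist_set d x Fs = d x g" using dist_set_attained[OF finFs FsC(2)] by blast
    have "d x g \<le> OPT d C k" using dist_le_cost[OF fin xC, of d Fs] g cFs by simp
    moreover have "d g x = d x g" using assms(1) xC g FsC unfolding finite_metric_def by auto
    ultimately have "x \<in> opt_ball d C k g" using g xC unfolding opt_ball_def by auto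
    then show "x \<in> \<Union>(opt_ball d C k ` Fs)" using g by blast
  qed
  have diam: "\<forall>P\<in>opt_ball d C k ` Fs. \<forall>x\<in>P. \<forall>y\<in>P. d x y \<le> 2 * OPT d C k"
  proof (intro ballI)
    fix P x y assume P: "P \<in> opt_ball d C k ` Fs" and x: "x \<in> P" and y: "y \<in> P"
    then obtain o' where o': "o' \<in> Fs" "P = opt_ball d C k o'" by auto
    have xy: "x \<in> C" "y \<in> C" "d o' x \<le> OPT d C k" "d o' y \<le> OPT d C k"
      using x y o' unfolding opt_ball_def by auto
    have oC: "o' \<in> C" using o' FsC by auto
    have "d x y \<le> d x o' + d o' y" using assms(1) xy oC unfolding finite_metric_def by blast
    moreover have "d x o' = d o' x" using assms(1) xy oC unfolding finite_metric_def by blast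
    ultimately show "d x y \<le> 2 * OPT d C k" using xy by linarith
  qed
  show ?thesis unfolding consolidation_def using finFs cov diam
    by (auto simp: opt_ball_def)
qed

lemma two_elems:
  assumes "card A \<ge> 2"
  shows "\<exists>x y. x \<in> A \<and> y \<in> A \<and> x \<noteq> y"
proof -
  have fA: "finite A" "A \<noteq> {}" using assms card.infinite by fastforce+
  then obtain x where x: "x \<in> A" by blast
  have "card (A - {x}) \<ge> 1" using assms x fA by (simp add: card_Diff_singleton)
  then have "A - {x} \<noteq> {}" by (metis card.empty not_one_le_zero)
  then obtain y where "y \<in> A - {x}" by blast
  then show ?thesis using x by blast
qed

theorem lemma1:
  fixes d :: "'a \<Rightarrow> 'a \<Rightarrow> real" and C :: "'a set" and k :: nat
    and Fs :: "'a set" and F :: "nat \<Rightarrow> 'a set"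
  assumes "finite_metric d C"
    and "1 \<le> k" and "k \<le> card C"
    and "optimal_solution d C k Fs"
    and "reverse_greedy d C k F"
    and "\<exists>oc\<in>Fs. card (opt_ball d C k oc \<inter> F (card C - k)) \<ge> 2"
  shows "\<forall>l i j. critical d C k F l i \<and> critical d C k F (Suc l) j \<longrightarrow>
           consolidation_number d C k Fs (F j) < consolidation_number d C k Fs (F i)"
proof (intro allI impI)
  fix l i j assume crit: "critical d C k F l i \<and> critical d C k F (Suc l) j"
  define N where "N = card C - k"
  define R where "R = OPT d C k"
  have iN: "i < N" and jN: "j < N" and ci: "cost d C (F i) \<le> 2 * real l * R"
    and cj: "cost d C (F (Suc j)) > 2 * real (Suc l) * R"
    using crit unfolding critical_def N_def R_def by auto
  have fin: "finite C" using assms(1) unfolding finite_metric_def by simp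
  have met: "\<forall>x\<in>C. \<forall>y\<in>C. d x y \<ge> 0 \<and> d x y = d y x"
    "\<forall>x\<in>C. \<forall>y\<in>C. \<forall>z\<in>C. d x z \<le> d x y + d y z"
    using assms(1) unfolding finite_metric_def by auto
  obtain ot where ot: "ot \<in> Fs" "card (opt_ball d C k ot \<inter> F N) \<ge> 2"
    using assms(6) unfolding N_def by auto
  then obtain f1 f2 where f12: "f1 \<in> opt_ball d C k ot \<inter> F N" "f2 \<in> opt_ball d C k ot \<inter> F N" "f1 \<noteq> f2"
    using two_elems by blast

  have FN: "\<And>x. x \<le> N \<Longrightarrow> F N \<subseteq> F x" using rg_mono[OF assms(5)] unfolding N_def by blast
  have FC: "\<And>x. x \<le> N \<Longrightarrow> F x \<subseteq> C" using rg_subC[OF assms(5)] unfolding N_def by blast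
  have Cne: "C \<noteq> {}" using FC[of N] f12 by auto
  have Fne: "\<And>x. x \<le> N \<Longrightarrow> F x \<noteq> {}" using FN f12 by blast
  have Ffin: "\<And>x. x \<le> N \<Longrightarrow> finite (F x)" using FC fin finite_subset by blast
  have R0: "R \<ge> 0"
  proof -
    have FsC: "Fs \<subseteq> C" "Fs \<noteq> {}" and cFs: "cost d C Fs = R"
      using assms(4) unfolding optimal_solution_def R_def by auto
    obtain c where c: "c \<in> C" "cost d C Fs = dist_set d c Fs" using cost_witness[OF fin Cne] by blast
    obtain g where g: "g \<in> Fs" "dist_set d c Fs = d c g"
      using dist_set_attained[OF finite_subset[OF FsC(1) fin] FsC(2)] by blast
    show ?thesis using met(1) c g FsC cFs by force
  qed
  have ij: "i \<le> j"
  proof (rule ccontr)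
    assume "\<not> i \<le> j"
    then have "Suc j \<le> i" by simp
    then have "F i \<subseteq> F (Suc j)" using rg_mono[OF assms(5)] iN unfolding N_def by simp
    then have "cost d C (F (Suc j)) \<le> cost d C (F i)"
      using cost_mono[OF fin Cne Ffin[of "Suc j"]] Fne[of i] iN jN by simp
    then show False using ci cj R0 by (simp add: algebra_simps)
  qed
  have Fji: "F j \<subseteq> F i" using rg_mono[OF assms(5) ij] jN unfolding N_def by simp
  have f1j: "f1 \<in> F j" "f2 \<in> F j" using FN[of j] jN f12 by auto
  obtain f where f: "f \<in> F j" "F (Suc j) = F j - {f}" "\<forall>g\<in>F j. cost d C (F j - {f}) \<le> cost d C (F j - {g})"
    using rg_step[OF assms(5), of j] jN unfolding N_def by auto
  have cf1: "cost d C (F j - {f1}) > 2 * real (Suc l) * R" using f f1j cj by fastforce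
  obtain c where c: "c \<in> C" "cost d C (F j - {f1}) = dist_set d c (F j - {f1})" using cost_witness[OF fin Cne] by blast
  have far: "\<And>h. h \<in> F j \<Longrightarrow> h \<noteq> f1 \<Longrightarrow> d c h > 2 * real (Suc l) * R"
  proof -
    fix h assume "h \<in> F j" "h \<noteq> f1"
    then have "dist_set d c (F j - {f1}) \<le> d c h" using dist_set_le[of "F j - {f1}" h d c] Ffin[of j] jN by auto
    then show "d c h > 2 * real (Suc l) * R" using c cf1 by linarith
  qed
  obtain g where g: "g \<in> F i" "dist_set d c (F i) = d c g" using dist_set_attained[OF Ffin Fne, of i d c] iN by auto
  have dcg: "d c g \<le> 2 * real l * R" using dist_le_cost[OF fin c(1), of d "F i"] g ci by simp
  have gC: "g \<in> C" using FC[of i] iN g by auto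
  define \<Gamma>i where "\<Gamma>i = consolidation_number d C k Fs (F i)"
  have exi: "\<exists>\<Phi>. consolidation d C k Fs (F i) \<Phi> \<and> card \<Phi> = card (opt_ball d C k ` Fs)"
    using consolidation_exists[OF assms(1) assms(4) FC[of i]] iN by auto
  have exm: "\<exists>m. \<exists>\<Phi>. consolidation d C k Fs (F i) \<Phi> \<and> card \<Phi> = m" using exi by blast
  obtain \<Phi> where \<Phi>: "consolidation d C k Fs (F i) \<Phi>" "card \<Phi> = \<Gamma>i"
    using LeastI_ex[OF exm] unfolding \<Gamma>i_def consolidation_number_def by blast
  have \<Phi>fin: "finite \<Phi>" and \<Phi>C: "\<forall>P\<in>\<Phi>. P \<subseteq> C" and \<Phi>cov: "F i \<subseteq> \<Union>\<Phi>"
    and \<Phi>diam: "\<forall>P\<in>\<Phi>. \<forall>x\<in>P. \<forall>y\<in>P. d x y \<le> 2 * R"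
    and \<Phi>pair: "\<forall>oc\<in>Fs. \<forall>x\<in>F i \<inter> opt_ball d C k oc. \<forall>y\<in>F i \<inter> opt_ball d C k oc. \<exists>P\<in>\<Phi>. x \<in> P \<and> y \<in> P"
    using \<Phi>(1) unfolding consolidation_def R_def by auto
  obtain P where P: "P \<in> \<Phi>" "g \<in> P" using \<Phi>cov g by auto
  have Pj: "P \<inter> F j \<subseteq> {f1}"
  proof
    fix h assume h: "h \<in> P \<inter> F j"
    have hC: "h \<in> C" using h P \<Phi>C by auto
    have "d g h \<le> 2 * R" using \<Phi>diam P h by auto
    moreover have "d c h \<le> d c g + d g h" using met(2) c(1) gC hC by blast
    ultimately have "d c h \<le> 2 * real (Suc l) * R" using dcg by (simp add: algebra_simps)
    then show "h \<in> {f1}" using far h by force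
  qed
  obtain Q where Q: "Q \<in> \<Phi>" "f1 \<in> Q" "f2 \<in> Q" using \<Phi>pair ot(1) f12 f1j Fji by blast
  have QP: "Q \<noteq> P" using Q Pj f1j f12 by blast
  have cons: "consolidation d C k Fs (F j) (\<Phi> - {P})"
    unfolding consolidation_def
  proof (intro conjI)
    show "finite (\<Phi> - {P})" using \<Phi>fin by simp
    show "\<forall>P\<in>\<Phi> - {P}. P \<subseteq> C" using \<Phi>C by simp
    show "\<forall>P'\<in>\<Phi> - {P}. \<forall>x\<in>P'. \<forall>y\<in>P'. d x y \<le> 2 * OPT d C k" using \<Phi>diam unfolding R_def by blast
    show "F j \<subseteq> \<Union> (\<Phi> - {P})"
    proof
      fix x assume x: "x \<in> F j"
      show "x \<in> \<Union> (\<Phi> - {P})"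
      proof (cases "x = f1")
        case True then show ?thesis using Q QP by auto
      next
        case False
        then obtain P' where "P' \<in> \<Phi>" "x \<in> P'" using \<Phi>cov x Fji by blast
        moreover have "P' \<noteq> P" using Pj x False \<open>x \<in> P'\<close> by blast
        ultimately show ?thesis by auto
      qed
    qed
    show "\<forall>oc\<in>Fs. \<forall>x\<in>F j \<inter> opt_ball d C k oc. \<forall>y\<in>F j \<inter> opt_ball d C k oc. \<exists>P'\<in>\<Phi> - {P}. x \<in> P' \<and> y \<in> P'"
    proof (intro ballI)
      fix oc x y assume oc: "oc \<in> Fs" and x: "x \<in> F j \<inter> opt_ball d C k oc" and y: "y \<in> F j \<inter> opt_ball d C k oc"
      obtain P' where P': "P' \<in> \<Phi>" "x \<in> P'" "y \<in> P'" using \<Phi>pair oc x y Fji by blast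
      show "\<exists>P'\<in>\<Phi> - {P}. x \<in> P' \<and> y \<in> P'"
      proof (cases "P' = P")
        case True
        then have "x = f1" "y = f1" using Pj P' x y by auto
        then show ?thesis using Q QP by auto
      next
        case False then show ?thesis using P' by auto
      qed
    qed
  qed
  have "consolidation_number d C k Fs (F j) \<le> card (\<Phi> - {P})"
    unfolding consolidation_number_def using cons by (intro Least_le) auto
  also have "\<dots> < card \<Phi>" by (rule card_Diff1_less[OF \<Phi>fin P(1)])
  finally show "consolidation_number d C k Fs (F j) < consolidation_number d C k Fs (F i)"
    using \<Phi>(2) unfolding \<Gamma>i_def by simp
qed

end
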